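(* Let $(G,+)$ be a Polish group and let $P \subseteq G$ be a perfect set. Then there is a perfect set $Q \subseteq P$ which is skew.
   Context: The group $(G,+)$ is written additively (not necessarily abelian), with $x-y=x+(-y)$. A set is perfect if it is closed and has no isolated points. A set $Z \subseteq G$ is skew if for all $x,y,v,w\in Z$: if $x\neq y$, $v\neq w$ and $\{x,y\}\neq\{v,w\}$, then $x-y\neq v-w$. *)

theory Defs
  imports "HOL-Analysis.Analysis"
begin

definition Polish_space :: "'a topology \<Rightarrow> bool" where
  "Polish_space X \<longleftrightarrow> completely_metrizable_space X \<and> separable_space X"

definition polish_group :: "'a::{topological_space, group_add} itself \<Rightarrow> bool" where
  "polish_group _ \<longleftrightarrow> Polish_space (euclidean :: 'a topology)
     \<and> continuous_on (UNIV :: ('a \<times> 'a) set) (\<lambda>p. fst p + snd p)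
     \<and> continuous_on (UNIV :: 'a set) uminus"

definition perfect_set :: "'a::topological_space set \<Rightarrow> bool" where
  "perfect_set P \<longleftrightarrow> closed P \<and> (\<forall>x\<in>P. x islimpt P)"

definition skew :: "'a::group_add set \<Rightarrow> bool" where
  "skew Z \<longleftrightarrow> (\<forall>x\<in>Z. \<forall>y\<in>Z. \<forall>v\<in>Z. \<forall>w\<in>Z.
      x \<noteq> y \<and> v \<noteq> w \<and> {x, y} \<noteq> {v, w} \<longrightarrow> x - y \<noteq> v - w)"

end

theory Submission
  imports Defs
begin

definition Lev :: "nat \<Rightarrow> bool list set" where "Lev n = {s. length s = n}"

lemma Lev_mem [simp]: "s \<in> Lev n \<longleftrightarrow> length s = n" by (simp add: Lev_def)

lemma finite_Lev: "finite (Lev n)"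
  using finite_lists_length_eq[of "UNIV::bool set" n] by (simp add: Lev_def)

definition kd :: "bool list \<Rightarrow> bool list \<Rightarrow> (bool list \<Rightarrow> 'a) \<Rightarrow> bool" where
  "kd s s' \<psi> \<longleftrightarrow> (s \<noteq> s' \<longrightarrow> \<psi> s \<noteq> \<psi> s')"

definition pat :: "'b \<Rightarrow> 'b \<Rightarrow> 'b \<Rightarrow> 'b \<Rightarrow> bool" where
  "pat s1 s2 s3 s4 \<longleftrightarrow> s1 \<noteq> s2 \<and> s3 \<noteq> s4 \<and> {s1,s2} \<noteq> {s3,s4}"

lemma pat_unique:
  assumes "pat s1 s2 s3 s4"
  shows "s1 \<notin> {s2,s3,s4} \<or> s2 \<notin> {s1,s3,s4} \<or> s3 \<notin> {s1,s2,s4} \<or> s4 \<notin> {s1,s2,s3}"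
proof (rule ccontr)
  assume a: "\<not> ?thesis"
  have H: "s1 \<noteq> s2" "s3 \<noteq> s4" "{s1,s2} \<noteq> {s3,s4}" using assms unfolding pat_def by blast+
  have "s1 \<in> {s3,s4}" "s2 \<in> {s3,s4}" "s3 \<in> {s1,s2}" "s4 \<in> {s1,s2}" using a H(1,2) by blast+
  then have "{s1,s2} = {s3,s4}" by blast
  then show False using H(3) by blast
qed

definition ks :: "bool list \<Rightarrow> bool list \<Rightarrow> bool list \<Rightarrow> bool list \<Rightarrow> (bool list \<Rightarrow> 'a::group_add) \<Rightarrow> bool" where
  "ks s1 s2 s3 s4 \<psi> \<longleftrightarrow> (pat s1 s2 s3 s4 \<longrightarrow> \<psi> s1 - \<psi> s2 \<noteq> \<psi> s3 - \<psi> s4)"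

definition KK :: "nat \<Rightarrow> ((bool list \<Rightarrow> 'a::group_add) \<Rightarrow> bool) set" where
  "KK n = (\<lambda>(s,s'). kd s s') ` (Lev n \<times> Lev n) \<union>
          (\<lambda>(s1,s2,s3,s4). ks s1 s2 s3 s4) ` (Lev n \<times> Lev n \<times> Lev n \<times> Lev n)"

lemma finite_KK: "finite (KK n)"
  by (simp add: KK_def finite_Lev)

lemma kd_in: "s \<in> Lev n \<Longrightarrow> s' \<in> Lev n \<Longrightarrow> kd s s' \<in> KK n"
  unfolding KK_def by (rule UnI1, rule image_eqI[where x="(s,s')"]) auto

lemma ks_in: "s1 \<in> Lev n \<Longrightarrow> s2 \<in> Lev n \<Longrightarrow> s3 \<in> Lev n \<Longrightarrow> s4 \<in> Lev n \<Longrightarrow> ks s1 s2 s3 s4 \<in> KK n"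
  unfolding KK_def by (rule UnI2, rule image_eqI[where x="(s1,s2,s3,s4)"]) auto

lemma KK_cases:
  assumes "k \<in> KK n"
    and "\<And>s s'. s \<in> Lev n \<Longrightarrow> s' \<in> Lev n \<Longrightarrow> k = kd s s' \<Longrightarrow> R"
    and "\<And>s1 s2 s3 s4. s1 \<in> Lev n \<Longrightarrow> s2 \<in> Lev n \<Longrightarrow> s3 \<in> Lev n \<Longrightarrow> s4 \<in> Lev n \<Longrightarrow> k = ks s1 s2 s3 s4 \<Longrightarrow> R"
  shows R
  using assms unfolding KK_def by blast

lemma diff_cancel1: "(y::'a::group_add) - b = a - b \<Longrightarrow> y = a"
  by (metis diff_add_cancel)

lemma diff_cancel2: "(a::'a::group_add) - y = a - b \<Longrightarrow> y = b"
  by (metis add_left_cancel diff_conv_add_uminus neg_equal_iff_equal)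

locale PGMb =
  fixes d :: "'a::group_add \<Rightarrow> 'a \<Rightarrow> real" and P :: "'a set"
  assumes dtri: "d x z \<le> d x y + d y z"
  and dsym: "d x y = d y x"
  and d0 [simp]: "d x x = 0"
  and dnonneg [simp]: "0 \<le> d x y"
  and dzero: "x \<in> UNIV \<Longrightarrow> y \<in> UNIV \<Longrightarrow> d x y = 0 \<longleftrightarrow> x = y"
  and near: "x \<in> P \<Longrightarrow> r > 0 \<Longrightarrow> \<exists>y\<in>P. y \<noteq> x \<and> d x y < r"
  and sub_open: "a - b \<noteq> e - f \<Longrightarrow> \<exists>\<epsilon>>0. \<forall>a' b' e' f'. d a a' < \<epsilon> \<longrightarrow> d b b' < \<epsilon> \<longrightarrow> d e e' < \<epsilon> \<longrightarrow> d f f' < \<epsilon> \<longrightarrow> a' - b' \<noteq> e' - f'"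
begin

lemma shrink:
  fixes T :: "'i set" and K :: "(('i \<Rightarrow> 'a) \<Rightarrow> bool) set"
  assumes fK: "finite K"
    and pert: "\<And>k \<phi> \<rho>. k \<in> K \<Longrightarrow> \<forall>t\<in>T. \<phi> t \<in> P \<and> \<rho> t > 0 \<Longrightarrow>
                 \<exists>\<psi>. (\<forall>t\<in>T. \<psi> t \<in> P \<and> d (\<phi> t) (\<psi> t) < \<rho> t) \<and> k \<psi>"
    and opn: "\<And>k \<phi>. k \<in> K \<Longrightarrow> \<forall>t\<in>T. \<phi> t \<in> P \<Longrightarrow> k \<phi> \<Longrightarrow>
                 \<exists>\<epsilon>>0. \<forall>\<psi>. (\<forall>t\<in>T. d (\<phi> t) (\<psi> t) < \<epsilon>) \<longrightarrow> k \<psi>"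
    and c0: "\<forall>t\<in>T. c0 t \<in> P \<and> r0 t > 0"
  shows "\<exists>c r. (\<forall>t\<in>T. c t \<in> P \<and> r t > 0 \<and> r t \<le> r0 t \<and> (\<forall>z. d (c t) z < r t \<longrightarrow> d (c0 t) z < r0 t))
             \<and> (\<forall>\<psi>. (\<forall>t\<in>T. \<psi> t \<in> P \<and> d (c t) (\<psi> t) < r t) \<longrightarrow> (\<forall>k\<in>K. k \<psi>))"
  using fK subset_refl[of K]
proof (induction K rule: finite_subset_induct)
  case empty
  show ?case
    by (rule exI[of _ c0], rule exI[of _ r0]) (use c0 in auto)
next
  case (insert k K')
  obtain c r where cr: "\<forall>t\<in>T. c t \<in> P \<and> r t > 0 \<and> r t \<le> r0 t \<and> (\<forall>z. d (c t) z < r t \<longrightarrow> d (c0 t) z < r0 t)"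
     and good: "\<forall>\<psi>. (\<forall>t\<in>T. \<psi> t \<in> P \<and> d (c t) (\<psi> t) < r t) \<longrightarrow> (\<forall>k\<in>K'. k \<psi>)"
    using insert.IH by blast
  obtain \<psi> where \<psi>: "\<forall>t\<in>T. \<psi> t \<in> P \<and> d (c t) (\<psi> t) < r t" "k \<psi>"
    using pert[of k c r] cr insert.hyps by auto
  obtain \<epsilon> where \<epsilon>: "\<epsilon> > 0" "\<forall>\<zeta>. (\<forall>t\<in>T. d (\<psi> t) (\<zeta> t) < \<epsilon>) \<longrightarrow> k \<zeta>"
    using opn[of k \<psi>] \<psi> insert.hyps by auto
  define r' where "r' t = min \<epsilon> (r t - d (c t) (\<psi> t))" for t
  show ?case
  proof (intro exI[of _ \<psi>] exI[of _ r'] conjI ballI allI impI)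
    fix t assume t: "t \<in> T"
    show "\<psi> t \<in> P" using \<psi> t by auto
    show "r' t > 0" using \<psi> t \<epsilon> by (auto simp: r'_def)
    show "r' t \<le> r0 t"
    proof -
      have "r' t \<le> r t - d (c t) (\<psi> t)" by (simp add: r'_def)
      moreover have "0 \<le> d (c t) (\<psi> t)" by simp
      moreover have "r t \<le> r0 t" using cr t by blast
      ultimately show ?thesis by linarith
    qed
    fix z assume z: "d (\<psi> t) z < r' t"
    have "d (c t) z \<le> d (c t) (\<psi> t) + d (\<psi> t) z" by (rule dtri)
    also have "\<dots> < r t" using z by (auto simp: r'_def)
    finally show "d (c0 t) z < r0 t" using cr t by auto
  next
    fix \<zeta> k' assume \<zeta>: "\<forall>t\<in>T. \<zeta> t \<in> P \<and> d (\<psi> t) (\<zeta> t) < r' t" and k': "k' \<in> insert k K'"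
    have 1: "\<forall>t\<in>T. \<zeta> t \<in> P \<and> d (c t) (\<zeta> t) < r t"
    proof
      fix t assume t: "t \<in> T"
      have "d (c t) (\<zeta> t) \<le> d (c t) (\<psi> t) + d (\<psi> t) (\<zeta> t)" by (rule dtri)
      also have "\<dots> < r t" using \<zeta> t by (auto simp: r'_def)
      finally show "\<zeta> t \<in> P \<and> d (c t) (\<zeta> t) < r t" using \<zeta> t by auto
    qed
    have 2: "\<forall>t\<in>T. d (\<psi> t) (\<zeta> t) < \<epsilon>" using \<zeta> by (auto simp: r'_def)
    show "k' \<zeta>" using k' good 1 \<epsilon> 2 by auto
  qed
qed

lemma modify:
  fixes \<phi> :: "'i \<Rightarrow> 'a" and \<rho> :: "'i \<Rightarrow> real"
  assumes "u \<in> T" "\<forall>t\<in>T. \<phi> t \<in> P \<and> \<rho> t > 0"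
  shows "\<exists>y. y \<noteq> \<phi> u \<and> (\<forall>t\<in>T. (\<phi>(u:=y)) t \<in> P \<and> d (\<phi> t) ((\<phi>(u:=y)) t) < \<rho> t)"
proof -
  obtain y where y: "y \<in> P" "y \<noteq> \<phi> u" "d (\<phi> u) y < \<rho> u"
    using near[of "\<phi> u" "\<rho> u"] assms by auto
  show ?thesis
    by (rule exI[of _ y]) (use y assms in auto)
qed

lemma pert_kd:
  fixes \<phi> :: "bool list \<Rightarrow> 'a" and \<rho> :: "bool list \<Rightarrow> real"
  assumes "\<forall>t\<in>T. \<phi> t \<in> P \<and> \<rho> t > 0" "s \<in> T"
  shows "\<exists>\<psi>. (\<forall>t\<in>T. \<psi> t \<in> P \<and> d (\<phi> t) (\<psi> t) < \<rho> t) \<and> kd s s' \<psi>"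
proof (cases "kd s s' \<phi>")
  case True
  then show ?thesis by (intro exI[of _ \<phi>]) (use assms in auto)
next
  case False
  then have "s \<noteq> s'" "\<phi> s = \<phi> s'" by (auto simp: kd_def)
  obtain y where y: "y \<noteq> \<phi> s" "\<forall>t\<in>T. (\<phi>(s:=y)) t \<in> P \<and> d (\<phi> t) ((\<phi>(s:=y)) t) < \<rho> t"
    using modify[OF assms(2,1)] by blast
  show ?thesis
    apply (rule exI[of _ "\<phi>(s:=y)"])
    using y \<open>s \<noteq> s'\<close> \<open>\<phi> s = \<phi> s'\<close> by (auto simp: kd_def)
qed

lemma pert_ks:
  fixes \<phi> :: "bool list \<Rightarrow> 'a" and \<rho> :: "bool list \<Rightarrow> real"
  assumes "\<forall>t\<in>T. \<phi> t \<in> P \<and> \<rho> t > 0" "s1 \<in> T" "s2 \<in> T" "s3 \<in> T" "s4 \<in> T"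
  shows "\<exists>\<psi>. (\<forall>t\<in>T. \<psi> t \<in> P \<and> d (\<phi> t) (\<psi> t) < \<rho> t) \<and> ks s1 s2 s3 s4 \<psi>"
proof (cases "ks s1 s2 s3 s4 \<phi>")
  case True
  then show ?thesis by (intro exI[of _ \<phi>]) (use assms in auto)
next
  case False
  then have H: "pat s1 s2 s3 s4" and eq: "\<phi> s1 - \<phi> s2 = \<phi> s3 - \<phi> s4"
    unfolding ks_def by blast+
  have "s1 \<notin> {s2,s3,s4} \<or> s2 \<notin> {s1,s3,s4} \<or> s3 \<notin> {s1,s2,s4} \<or> s4 \<notin> {s1,s2,s3}"
    using pat_unique[OF H] .
  then show ?thesis
  proof (elim disjE)
    assume u: "s1 \<notin> {s2,s3,s4}"
    obtain y where y: "y \<noteq> \<phi> s1" "\<forall>t\<in>T. (\<phi>(s1:=y)) t \<in> P \<and> d (\<phi> t) ((\<phi>(s1:=y)) t) < \<rho> t"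
      using modify[OF assms(2,1)] by blast
    have ne: "y - \<phi> s2 \<noteq> \<phi> s3 - \<phi> s4" using eq y(1) diff_cancel1[of y "\<phi> s2" "\<phi> s1"] by auto
    have v: "(\<phi>(s1:=y)) s1 = y" "(\<phi>(s1:=y)) s2 = \<phi> s2" "(\<phi>(s1:=y)) s3 = \<phi> s3" "(\<phi>(s1:=y)) s4 = \<phi> s4"
      using u by auto
    have "ks s1 s2 s3 s4 (\<phi>(s1:=y))" unfolding ks_def v using ne by blast
    then show ?thesis using y(2) by blast
  next
    assume u: "s2 \<notin> {s1,s3,s4}"
    obtain y where y: "y \<noteq> \<phi> s2" "\<forall>t\<in>T. (\<phi>(s2:=y)) t \<in> P \<and> d (\<phi> t) ((\<phi>(s2:=y)) t) < \<rho> t"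
      using modify[OF assms(3,1)] by blast
    have ne: "\<phi> s1 - y \<noteq> \<phi> s3 - \<phi> s4" using eq y(1) diff_cancel2[of "\<phi> s1" y "\<phi> s2"] by auto
    have v: "(\<phi>(s2:=y)) s1 = \<phi> s1" "(\<phi>(s2:=y)) s2 = y" "(\<phi>(s2:=y)) s3 = \<phi> s3" "(\<phi>(s2:=y)) s4 = \<phi> s4"
      using u by auto
    have "ks s1 s2 s3 s4 (\<phi>(s2:=y))" unfolding ks_def v using ne by blast
    then show ?thesis using y(2) by blast
  next
    assume u: "s3 \<notin> {s1,s2,s4}"
    obtain y where y: "y \<noteq> \<phi> s3" "\<forall>t\<in>T. (\<phi>(s3:=y)) t \<in> P \<and> d (\<phi> t) ((\<phi>(s3:=y)) t) < \<rho> t"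
      using modify[OF assms(4,1)] by blast
    have ne: "\<phi> s1 - \<phi> s2 \<noteq> y - \<phi> s4" using eq y(1) diff_cancel1[of y "\<phi> s4" "\<phi> s3"] by auto
    have v: "(\<phi>(s3:=y)) s1 = \<phi> s1" "(\<phi>(s3:=y)) s2 = \<phi> s2" "(\<phi>(s3:=y)) s3 = y" "(\<phi>(s3:=y)) s4 = \<phi> s4"
      using u by auto
    have "ks s1 s2 s3 s4 (\<phi>(s3:=y))" unfolding ks_def v using ne by blast
    then show ?thesis using y(2) by blast
  next
    assume u: "s4 \<notin> {s1,s2,s3}"
    obtain y where y: "y \<noteq> \<phi> s4" "\<forall>t\<in>T. (\<phi>(s4:=y)) t \<in> P \<and> d (\<phi> t) ((\<phi>(s4:=y)) t) < \<rho> t"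
      using modify[OF assms(5,1)] by blast
    have ne: "\<phi> s1 - \<phi> s2 \<noteq> \<phi> s3 - y" using eq y(1) diff_cancel2[of "\<phi> s3" y "\<phi> s4"] by auto
    have v: "(\<phi>(s4:=y)) s1 = \<phi> s1" "(\<phi>(s4:=y)) s2 = \<phi> s2" "(\<phi>(s4:=y)) s3 = \<phi> s3" "(\<phi>(s4:=y)) s4 = y"
      using u by auto
    have "ks s1 s2 s3 s4 (\<phi>(s4:=y))" unfolding ks_def v using ne by blast
    then show ?thesis using y(2) by blast
  qed
qed

lemma open_kd:
  assumes "kd s s' \<phi>" "s \<in> T" "s' \<in> T"
  shows "\<exists>\<epsilon>>0. \<forall>\<psi>. (\<forall>t\<in>T. d (\<phi> t) (\<psi> t) < \<epsilon>) \<longrightarrow> kd s s' \<psi>"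
proof (cases "s = s'")
  case True
  then show ?thesis by (intro exI[of _ 1]) (auto simp: kd_def)
next
  case False
  then have ne: "\<phi> s \<noteq> \<phi> s'" using assms by (auto simp: kd_def)
  then have pos: "d (\<phi> s) (\<phi> s') > 0" using dzero dnonneg by (metis UNIV_I less_eq_real_def)
  show ?thesis
  proof (intro exI[of _ "d (\<phi> s) (\<phi> s') / 2"] conjI allI impI)
    show "d (\<phi> s) (\<phi> s') / 2 > 0" using pos by simp
    fix \<psi> assume a: "\<forall>t\<in>T. d (\<phi> t) (\<psi> t) < d (\<phi> s) (\<phi> s') / 2"
    show "kd s s' \<psi>"
      unfolding kd_def
    proof
      assume "s \<noteq> s'"
      show "\<psi> s \<noteq> \<psi> s'"
      proof
        assume e: "\<psi> s = \<psi> s'"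
        have "d (\<phi> s) (\<phi> s') \<le> d (\<phi> s) (\<psi> s) + d (\<psi> s) (\<phi> s')" by (rule dtri)
        also have "\<dots> = d (\<phi> s) (\<psi> s) + d (\<phi> s') (\<psi> s')" using e dsym by simp
        also have "\<dots> < d (\<phi> s) (\<phi> s')"
        proof -
          have "d (\<phi> s) (\<psi> s) < d (\<phi> s) (\<phi> s') / 2" "d (\<phi> s') (\<psi> s') < d (\<phi> s) (\<phi> s') / 2"
            using a assms(2,3) by auto
          then show ?thesis by linarith
        qed
        finally show False by simp
      qed
    qed
  qed
qed

lemma open_ks:
  assumes "ks s1 s2 s3 s4 \<phi>" "s1 \<in> T" "s2 \<in> T" "s3 \<in> T" "s4 \<in> T"
  shows "\<exists>\<epsilon>>0. \<forall>\<psi>. (\<forall>t\<in>T. d (\<phi> t) (\<psi> t) < \<epsilon>) \<longrightarrow> ks s1 s2 s3 s4 \<psi>"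
proof (cases "pat s1 s2 s3 s4")
  case False
  have "ks s1 s2 s3 s4 \<psi>" for \<psi> :: "bool list \<Rightarrow> 'a" unfolding ks_def using False by blast
  then show ?thesis by (intro exI[of _ 1]) simp
next
  case True
  then have "\<phi> s1 - \<phi> s2 \<noteq> \<phi> s3 - \<phi> s4" using assms(1) unfolding ks_def by blast
  then obtain \<epsilon> where \<epsilon>: "\<epsilon> > 0" "\<forall>a' b' e' f'. d (\<phi> s1) a' < \<epsilon> \<longrightarrow> d (\<phi> s2) b' < \<epsilon> \<longrightarrow>
      d (\<phi> s3) e' < \<epsilon> \<longrightarrow> d (\<phi> s4) f' < \<epsilon> \<longrightarrow> a' - b' \<noteq> e' - f'"
    using sub_open by blast
  show ?thesis
  proof (intro exI[of _ \<epsilon>] conjI allI impI)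
    show "\<epsilon> > 0" by (rule \<epsilon>(1))
    fix \<psi> assume a: "\<forall>t\<in>T. d (\<phi> t) (\<psi> t) < \<epsilon>"
    have "d (\<phi> s1) (\<psi> s1) < \<epsilon>" "d (\<phi> s2) (\<psi> s2) < \<epsilon>" "d (\<phi> s3) (\<psi> s3) < \<epsilon>" "d (\<phi> s4) (\<psi> s4) < \<epsilon>"
      using a assms(2-5) by blast+
    then have "\<psi> s1 - \<psi> s2 \<noteq> \<psi> s3 - \<psi> s4" using \<epsilon>(2) by blast
    then show "ks s1 s2 s3 s4 \<psi>" unfolding ks_def by blast
  qed
qed

definition Inv_lv :: "nat \<Rightarrow> (bool list \<Rightarrow> 'a) \<Rightarrow> (bool list \<Rightarrow> real) \<Rightarrow> bool" where
  "Inv_lv n c r \<longleftrightarrow> (\<forall>s\<in>Lev n. c s \<in> P \<and> 0 < r s \<and> r s \<le> (1/2)^n) \<and>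
     (\<forall>\<psi>. (\<forall>s\<in>Lev n. \<psi> s \<in> P \<and> d (c s) (\<psi> s) < r s) \<longrightarrow> (\<forall>k\<in>KK n. k \<psi>))"

definition stp :: "nat \<Rightarrow> (bool list \<Rightarrow> 'a) \<Rightarrow> (bool list \<Rightarrow> real) \<Rightarrow> (bool list \<Rightarrow> 'a) \<Rightarrow> (bool list \<Rightarrow> real) \<Rightarrow> bool" where
  "stp n c r c' r' \<longleftrightarrow> Inv_lv (Suc n) c' r' \<and>
     (\<forall>s\<in>Lev n. \<forall>b z. d (c' (s@[b])) z < r' (s@[b]) \<longrightarrow> d (c s) z < r s / 2)"

lemma step_ex:
  assumes "Inv_lv n c r"
  shows "\<exists>c' r'. stp n c r c' r'"
proof -
  define c0 where "c0 t = c (butlast t)" for t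
  define r0 where "r0 t = min (r (butlast t) / 2) ((1/2)^Suc n)" for t
  have bl: "t \<in> Lev (Suc n) \<Longrightarrow> butlast t \<in> Lev n" for t by simp
  have c0: "\<forall>t\<in>Lev (Suc n). c0 t \<in> P \<and> r0 t > 0"
  proof
    fix t :: "bool list" assume t: "t \<in> Lev (Suc n)"
    have inv1: "\<forall>s\<in>Lev n. c s \<in> P \<and> 0 < r s \<and> r s \<le> (1/2)^n" using assms unfolding Inv_lv_def by blast
    have "c (butlast t) \<in> P" "0 < r (butlast t)" using inv1 bl[OF t] by blast+
    then show "c0 t \<in> P \<and> r0 t > 0" by (simp add: c0_def r0_def)
  qed
  have "\<exists>c' r'. (\<forall>t\<in>Lev (Suc n). c' t \<in> P \<and> r' t > 0 \<and> r' t \<le> r0 t \<and> (\<forall>z. d (c' t) z < r' t \<longrightarrow> d (c0 t) z < r0 t))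
             \<and> (\<forall>\<psi>. (\<forall>t\<in>Lev (Suc n). \<psi> t \<in> P \<and> d (c' t) (\<psi> t) < r' t) \<longrightarrow> (\<forall>k\<in>KK (Suc n). k \<psi>))"
  proof (rule shrink[OF finite_KK _ _ c0])
    fix k :: "(bool list \<Rightarrow> 'a) \<Rightarrow> bool" and \<phi> :: "bool list \<Rightarrow> 'a" and \<rho> :: "bool list \<Rightarrow> real" assume k: "k \<in> KK (Suc n)" and h: "\<forall>t\<in>Lev (Suc n). \<phi> t \<in> P \<and> 0 < \<rho> t"
    show "\<exists>\<psi>. (\<forall>t\<in>Lev (Suc n). \<psi> t \<in> P \<and> d (\<phi> t) (\<psi> t) < \<rho> t) \<and> k \<psi>"
      using k
    proof (rule KK_cases)
      fix s s' assume "s \<in> Lev (Suc n)" "s' \<in> Lev (Suc n)" "k = kd s s'"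
      then show ?thesis using pert_kd[OF h, of s s'] by simp
    next
      fix s1 s2 s3 s4 assume "s1 \<in> Lev (Suc n)" "s2 \<in> Lev (Suc n)" "s3 \<in> Lev (Suc n)" "s4 \<in> Lev (Suc n)"
        "k = ks s1 s2 s3 s4"
      then show ?thesis using pert_ks[OF h, of s1 s2 s3 s4] by simp
    qed
  next
    fix k :: "(bool list \<Rightarrow> 'a) \<Rightarrow> bool" and \<phi> :: "bool list \<Rightarrow> 'a" assume k: "k \<in> KK (Suc n)" and h: "\<forall>t\<in>Lev (Suc n). \<phi> t \<in> P" and kp: "k \<phi>"
    show "\<exists>\<epsilon>>0. \<forall>\<psi>. (\<forall>t\<in>Lev (Suc n). d (\<phi> t) (\<psi> t) < \<epsilon>) \<longrightarrow> k \<psi>"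
      using k
    proof (rule KK_cases)
      fix s s' assume "s \<in> Lev (Suc n)" "s' \<in> Lev (Suc n)" "k = kd s s'"
      then show ?thesis using open_kd[of s s' \<phi> "Lev (Suc n)"] kp by simp
    next
      fix s1 s2 s3 s4 assume "s1 \<in> Lev (Suc n)" "s2 \<in> Lev (Suc n)" "s3 \<in> Lev (Suc n)" "s4 \<in> Lev (Suc n)"
        "k = ks s1 s2 s3 s4"
      then show ?thesis using open_ks[of s1 s2 s3 s4 \<phi> "Lev (Suc n)"] kp by simp
    qed
  qed
  then obtain c' r' where cr: "\<forall>t\<in>Lev (Suc n). c' t \<in> P \<and> r' t > 0 \<and> r' t \<le> r0 t \<and> (\<forall>z. d (c' t) z < r' t \<longrightarrow> d (c0 t) z < r0 t)"
    and good: "\<forall>\<psi>. (\<forall>t\<in>Lev (Suc n). \<psi> t \<in> P \<and> d (c' t) (\<psi> t) < r' t) \<longrightarrow> (\<forall>k\<in>KK (Suc n). k \<psi>)"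
    by blast
  have "Inv_lv (Suc n) c' r'"
    unfolding Inv_lv_def
  proof (rule conjI)
    show "\<forall>s\<in>Lev (Suc n). c' s \<in> P \<and> 0 < r' s \<and> r' s \<le> (1/2)^Suc n"
    proof
      fix s assume s: "s \<in> Lev (Suc n)"
      have r0le: "r0 s \<le> (1/2)^Suc n" by (simp add: r0_def)
      have h: "c' s \<in> P" "0 < r' s" "r' s \<le> r0 s" using cr s by blast+
      show "c' s \<in> P \<and> 0 < r' s \<and> r' s \<le> (1/2)^Suc n"
      proof (intro conjI)
        show "c' s \<in> P" using h by simp
        show "0 < r' s" using h by simp
        show "r' s \<le> (1/2)^Suc n" using h(3) r0le by linarith
      qed
    qed
  next
    show "\<forall>\<psi>. (\<forall>s\<in>Lev (Suc n). \<psi> s \<in> P \<and> d (c' s) (\<psi> s) < r' s) \<longrightarrow> (\<forall>k\<in>KK (Suc n). k \<psi>)"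
      using good by blast
  qed
  moreover have "\<forall>s\<in>Lev n. \<forall>b z. d (c' (s@[b])) z < r' (s@[b]) \<longrightarrow> d (c s) z < r s / 2"
  proof (intro ballI allI impI)
    fix s b z assume s: "s \<in> Lev n" and z: "d (c' (s@[b])) z < r' (s@[b])"
    have "s @ [b] \<in> Lev (Suc n)" using s by simp
    then have "d (c0 (s@[b])) z < r0 (s@[b])" using cr z by blast
    then show "d (c s) z < r s / 2" by (simp add: c0_def r0_def)
  qed
  ultimately show ?thesis unfolding stp_def by blast
qed

primrec lvl :: "'a \<Rightarrow> nat \<Rightarrow> (bool list \<Rightarrow> 'a) \<times> (bool list \<Rightarrow> real)" where
  "lvl p0 0 = (\<lambda>_. p0, \<lambda>_. 1)"
| "lvl p0 (Suc n) = (SOME cr. stp n (fst (lvl p0 n)) (snd (lvl p0 n)) (fst cr) (snd cr))"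

lemma lvl_stp:
  assumes "Inv_lv n (fst (lvl p0 n)) (snd (lvl p0 n))"
  shows "stp n (fst (lvl p0 n)) (snd (lvl p0 n)) (fst (lvl p0 (Suc n))) (snd (lvl p0 (Suc n)))"
proof -
  obtain c' r' where "stp n (fst (lvl p0 n)) (snd (lvl p0 n)) c' r'" using step_ex[OF assms] by blast
  then have ex: "\<exists>cr. stp n (fst (lvl p0 n)) (snd (lvl p0 n)) (fst cr) (snd cr)" by (intro exI[of _ "(c',r')"]) simp
  let ?Q = "\<lambda>cr. stp n (fst (lvl p0 n)) (snd (lvl p0 n)) (fst cr) (snd cr)"
  have "?Q (SOME cr. ?Q cr)" using ex by (rule someI_ex)
  moreover have "lvl p0 (Suc n) = (SOME cr. ?Q cr)" by (simp only: lvl.simps)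
  ultimately show ?thesis by (simp only:)
qed

lemma lvl_inv:
  assumes "p0 \<in> P"
  shows "Inv_lv n (fst (lvl p0 n)) (snd (lvl p0 n))"
proof (induction n)
  case 0
  show ?case
    unfolding Inv_lv_def
  proof (rule conjI)
    show "\<forall>s\<in>Lev 0. fst (lvl p0 0) s \<in> P \<and> 0 < snd (lvl p0 0) s \<and> snd (lvl p0 0) s \<le> (1/2)^0"
      using assms by simp
  next
    have "k \<psi>" if "k \<in> KK 0" for k :: "(bool list \<Rightarrow> 'a) \<Rightarrow> bool" and \<psi>
      using that
    proof (rule KK_cases)
      fix s s' assume "s \<in> Lev 0" "s' \<in> Lev 0" "k = kd s s'"
      then show ?thesis by (simp add: kd_def)
    next
      fix s1 s2 s3 s4 assume "s1 \<in> Lev 0" "s2 \<in> Lev 0" "s3 \<in> Lev 0" "s4 \<in> Lev 0"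
        "k = ks s1 s2 s3 s4"
      then show ?thesis by (simp add: ks_def pat_def)
    qed
    then show "\<forall>\<psi>. (\<forall>s\<in>Lev 0. \<psi> s \<in> P \<and> d (fst (lvl p0 0) s) (\<psi> s) < snd (lvl p0 0) s) \<longrightarrow> (\<forall>k\<in>KK 0. k \<psi>)"
      by blast
  qed
next
  case (Suc n)
  then show ?case using lvl_stp[OF Suc] unfolding stp_def by blast
qed

end


locale PGM = Metric_space "UNIV :: 'a set" d
  for d :: "'a::{topological_space,group_add} \<Rightarrow> 'a \<Rightarrow> real" +
  fixes P :: "'a set"
  assumes mtop: "mtopology = euclidean"
    and compl: "mcomplete"
    and cont_add: "continuous_on UNIV (\<lambda>p::'a\<times>'a. fst p + snd p)"
    and cont_neg: "continuous_on (UNIV::'a set) uminus"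
    and Pcl: "closed P"
    and Pperf: "\<forall>x\<in>P. x islimpt P"
begin

lemma m_dtri: "d x z \<le> d x y + d y z"
  using triangle by auto

lemma m_dsym: "d x y = d y x" using commute by auto

lemma m_d0 [simp]: "d x x = 0" by simp

lemma open_ball: "open U \<Longrightarrow> x \<in> U \<Longrightarrow> \<exists>r>0. \<forall>y. d x y < r \<longrightarrow> y \<in> U"
proof -
  assume "open U" "x \<in> U"
  then have "openin mtopology U" using mtop by simp
  then obtain r where "r > 0" "mball x r \<subseteq> U" using iffD1[OF openin_mtopology \<open>openin mtopology U\<close>] \<open>x\<in>U\<close> by blast
  then show ?thesis
    apply (intro exI[of _ r])
    by (auto simp: subset_eq)
qed

lemma closed_cb: "closed {y. d c y \<le> \<rho>}"
proof -
  have "closedin mtopology (mcball c \<rho>)" by simp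
  moreover have "mcball c \<rho> = {y. d c y \<le> \<rho>}" by auto
  ultimately show ?thesis using mtop by simp
qed

lemma m_near: "x \<in> P \<Longrightarrow> r > 0 \<Longrightarrow> \<exists>y\<in>P. y \<noteq> x \<and> d x y < r"
proof -
  assume "x \<in> P" "r > 0"
  have "openin mtopology (mball x r)" by simp
  then have oball: "open (mball x r)" using mtop by simp
  have xm: "x \<in> mball x r" using \<open>r>0\<close> by simp
  have xl: "x islimpt P" using Pperf \<open>x\<in>P\<close> by blast
  obtain y where "y \<in> P" "y \<in> mball x r" "y \<noteq> x"
    using islimptE[OF xl xm oball] by blast
  then have "d x y < r" by simp
  then show ?thesis using \<open>y \<in> P\<close> \<open>y \<noteq> x\<close> by blast
qed

lemma cont_diff: "continuous_on UNIV (\<lambda>p::'a\<times>'a. fst p - snd p)"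
proof -
  have 1: "continuous_on UNIV (\<lambda>p::'a\<times>'a. (fst p, - snd p))"
    apply (rule continuous_on_Pair)
    apply (rule continuous_on_fst[OF continuous_on_id])
    apply (rule continuous_on_compose2[OF cont_neg])
      apply (rule continuous_on_snd[OF continuous_on_id]) by auto
  have "continuous_on UNIV ((\<lambda>p::'a\<times>'a. fst p + snd p) \<circ> (\<lambda>p::'a\<times>'a. (fst p, - snd p)))"
    apply (rule continuous_on_compose[OF 1])
    by (rule continuous_on_subset[OF cont_add]) simp
  then show ?thesis by (simp add: o_def)
qed

lemma diff_nbhd: "open U \<Longrightarrow> a - b \<in> U \<Longrightarrow> \<exists>r>0. \<forall>a' b'. d a a' < r \<longrightarrow> d b b' < r \<longrightarrow> a' - b' \<in> U"
proof -
  assume U: "open U" "a - b \<in> U"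
  have o1: "open ((\<lambda>p::'a\<times>'a. fst p - snd p) -` U \<inter> UNIV)"
    using iffD1[OF continuous_on_open_vimage[OF open_UNIV] cont_diff] U(1) by blast
  have o2: "open ((\<lambda>p::'a\<times>'a. fst p - snd p) -` U)" using o1 by simp
  have ab: "(a,b) \<in> (\<lambda>p::'a\<times>'a. fst p - snd p) -` U" using U by simp
  obtain A B where AB: "open A" "open B" "(a,b) \<in> A \<times> B" "A \<times> B \<subseteq> (\<lambda>p::'a\<times>'a. fst p - snd p) -` U"
    by (rule open_prod_elim[OF o2 ab])
  have aA: "a \<in> A" "b \<in> B" using AB(3) by auto
  obtain r1 where r1: "r1 > 0" "\<forall>y. d a y < r1 \<longrightarrow> y \<in> A" using open_ball[OF AB(1) aA(1)] by blast
  obtain r2 where r2: "r2 > 0" "\<forall>y. d b y < r2 \<longrightarrow> y \<in> B" using open_ball[OF AB(2) aA(2)] by blast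
  show ?thesis
  proof (intro exI[of _ "min r1 r2"] conjI allI impI)
    show "min r1 r2 > 0" using r1 r2 by simp
    fix a' b' assume "d a a' < min r1 r2" "d b b' < min r1 r2"
    then have "d a a' < r1" "d b b' < r2" by simp_all
    then have "a' \<in> A" "b' \<in> B" using r1(2) r2(2) by blast+
    then have "(a',b') \<in> A \<times> B" by simp
    then have "(a',b') \<in> (\<lambda>p::'a\<times>'a. fst p - snd p) -` U" by (rule subsetD[OF AB(4)])
    then show "a' - b' \<in> U" by simp
  qed
qed

lemma m_sub_open:
  assumes "a - b \<noteq> e - f"
  shows "\<exists>\<epsilon>>0. \<forall>a' b' e' f'. d a a' < \<epsilon> \<longrightarrow> d b b' < \<epsilon> \<longrightarrow> d e e' < \<epsilon> \<longrightarrow> d f f' < \<epsilon> \<longrightarrow> a' - b' \<noteq> e' - f'"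
proof -
  have "Hausdorff_space mtopology" by (rule Hausdorff_space_mtopology)
  then have "Hausdorff_space (euclidean::'a topology)" using mtop by simp
  then obtain U V where UV0: "openin euclidean U" "openin euclidean V" "a - b \<in> U" "e - f \<in> V" "disjnt U V"
    using assms unfolding Hausdorff_space_def topspace_euclidean by blast
  have UV: "open U" "open V" "a - b \<in> U" "e - f \<in> V" "disjnt U V"
    using UV0 open_openin by auto
  obtain r1 where r1: "r1 > 0" "\<forall>a' b'. d a a' < r1 \<longrightarrow> d b b' < r1 \<longrightarrow> a' - b' \<in> U"
    using diff_nbhd[OF UV(1) UV(3)] by blast
  obtain r2 where r2: "r2 > 0" "\<forall>a' b'. d e a' < r2 \<longrightarrow> d f b' < r2 \<longrightarrow> a' - b' \<in> V"
    using diff_nbhd[OF UV(2) UV(4)] by blast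
  show ?thesis
  proof (intro exI[of _ "min r1 r2"] conjI allI impI)
    show "min r1 r2 > 0" using r1 r2 by simp
    fix a' b' e' f' assume "d a a' < min r1 r2" "d b b' < min r1 r2" "d e e' < min r1 r2" "d f f' < min r1 r2"
    then have h: "d a a' < r1" "d b b' < r1" "d e e' < r2" "d f f' < r2" by simp_all
    have u: "a' - b' \<in> U" using r1(2)[rule_format, OF h(1) h(2)] .
    have v: "e' - f' \<in> V" using r2(2)[rule_format, OF h(3) h(4)] .
    show "a' - b' \<noteq> e' - f'"
    proof
      assume e: "a' - b' = e' - f'"
      have "e' - f' \<in> U" using u unfolding e .
      then have "e' - f' \<in> U \<inter> V" using v by (rule IntI)
      moreover have "U \<inter> V = {}" using UV(5) unfolding disjnt_def .
      ultimately show False by simp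
    qed
  qed
qed

end

sublocale PGM \<subseteq> PGMb d P
  apply unfold_locales
        apply (rule m_dtri)
       apply (rule m_dsym)
      apply simp
     apply simp
    apply simp
   apply (erule m_near, assumption)
  apply (erule m_sub_open)
  done

locale PGM2 = PGM d P for d :: "'a::{topological_space,group_add} \<Rightarrow> 'a \<Rightarrow> real" and P +
  fixes p0 assumes p0: "p0 \<in> P"
begin

definition C :: "bool list \<Rightarrow> 'a" where "C s = fst (lvl p0 (length s)) s"
definition R :: "bool list \<Rightarrow> real" where "R s = snd (lvl p0 (length s)) s"
definition F :: "bool list \<Rightarrow> 'a set" where "F s = {z\<in>P. d (C s) z \<le> R s / 2}"
definition Q :: "'a set" where "Q = {x. \<forall>n. \<exists>s. length s = n \<and> x \<in> F s}"

lemma invL: "Inv_lv n (fst (lvl p0 n)) (snd (lvl p0 n))"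
  using lvl_inv[OF p0] .

lemma CR: "C s \<in> P" "0 < R s" "R s \<le> (1/2)^(length s)"
  using invL[of "length s"] unfolding Inv_lv_def C_def R_def by auto

lemma C_in: "C s \<in> F s"
  using CR(1) CR(2)[of s] by (simp add: F_def less_imp_le)

lemma F_sub: "F (s@[b]) \<subseteq> F s"
proof
  fix z assume z: "z \<in> F (s@[b])"
  have st: "stp (length s) (fst (lvl p0 (length s))) (snd (lvl p0 (length s)))
     (fst (lvl p0 (Suc (length s)))) (snd (lvl p0 (Suc (length s))))"
    using lvl_stp[OF invL] .
  have "d (C (s@[b])) z < R (s@[b])" using z CR(2)[of "s@[b]"] by (simp add: F_def)
  then have "d (C s) z < R s / 2" using st unfolding stp_def C_def R_def by simp
  then show "z \<in> F s" using z by (simp add: F_def)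
qed

lemma F_app: "F (s@u) \<subseteq> F s"
proof (induction u rule: rev_induct)
  case Nil
  then show ?case by simp
next
  case (snoc b u)
  have "F (s @ u @ [b]) = F ((s@u)@[b])" by simp
  also have "\<dots> \<subseteq> F (s@u)" by (rule F_sub)
  finally show ?case using snoc by blast
qed

lemma F_closed: "closed (F s)"
proof -
  have "F s = P \<inter> {z. d (C s) z \<le> R s / 2}" by (auto simp: F_def)
  then show ?thesis by (metis closed_Int Pcl closed_cb)
qed

lemma F_disj:
  assumes "length s = length s'" "s \<noteq> s'" "z \<in> F s" "z \<in> F s'"
  shows False
proof -
  define n where "n = length s"
  define \<psi> where "\<psi> t = (if t = s \<or> t = s' then z else fst (lvl p0 n) t)" for t
  have box: "\<forall>t\<in>Lev n. \<psi> t \<in> P \<and> d (fst (lvl p0 n) t) (\<psi> t) < snd (lvl p0 n) t"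
  proof
    fix t assume t: "t \<in> Lev n"
    show "\<psi> t \<in> P \<and> d (fst (lvl p0 n) t) (\<psi> t) < snd (lvl p0 n) t"
    proof (cases "t = s \<or> t = s'")
      case True
      then have "z \<in> F t" using assms by auto
      then have "z \<in> P" "d (C t) z \<le> R t / 2" by (auto simp: F_def)
      moreover have "R t > 0" by (rule CR)
      ultimately show ?thesis using True t unfolding \<psi>_def C_def R_def by simp
    next
      case False
      have "C t \<in> P" "R t > 0" by (rule CR)+
      then show ?thesis using False t unfolding \<psi>_def C_def R_def by simp
    qed
  qed
  have "kd s s' \<in> KK n" by (rule kd_in) (use assms n_def in auto)
  then have "kd s s' \<psi>" using invL[of n] box unfolding Inv_lv_def by blast
  then show False using assms(2) by (simp add: kd_def \<psi>_def)
qed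

lemma F_diam:
  assumes "a \<in> F s" "b \<in> F s"
  shows "d a b \<le> (1/2)^(length s)"
proof -
  have "d a b \<le> d a (C s) + d (C s) b" by (rule dtri)
  also have "\<dots> = d (C s) a + d (C s) b" using dsym by simp
  also have "\<dots> \<le> R s" using assms by (simp add: F_def)
  also have "\<dots> \<le> (1/2)^(length s)" by (rule CR)
  finally show ?thesis .
qed

lemma meetQ: "\<exists>z\<in>Q. z \<in> F t"
proof -
  define G where "G k = F (t @ replicate k False)" for k
  have cl: "\<forall>k. closedin mtopology (G k)"
    unfolding G_def by (metis closed_closedin mtop F_closed)
  have ne: "\<forall>k. G k \<noteq> {}" unfolding G_def using C_in by blast
  have dec: "decseq G"
  proof (rule decseq_SucI)
    fix k
    have "t @ replicate (Suc k) False = (t @ replicate k False) @ [False]"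
      by (simp add: replicate_append_same)
    then show "G (Suc k) \<subseteq> G k" unfolding G_def using F_sub by metis
  qed
  have sm: "\<forall>\<epsilon>>0. \<exists>n a. G n \<subseteq> mcball a \<epsilon>"
  proof (intro allI impI)
    fix \<epsilon> :: real assume "\<epsilon> > 0"
    then obtain k where k: "(1/2::real)^k < \<epsilon>" using real_arch_pow_inv[of \<epsilon> "1/2"] by auto
    define s where "s = t @ replicate k False"
    have "(1/2::real)^(length s) \<le> (1/2)^k"
      by (rule power_decreasing) (auto simp: s_def)
    then have "R s \<le> \<epsilon>" using CR(3)[of s] k by linarith
    then have "G k \<subseteq> mcball (C s) \<epsilon>" using CR(2)[of s] unfolding G_def s_def[symmetric] F_def by auto
    then show "\<exists>n a. G n \<subseteq> mcball a \<epsilon>" by blast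
  qed
  have "\<Inter> (range G) \<noteq> {}" using compl[unfolded mcomplete_nest, rule_format, of G] cl ne dec sm by blast
  then obtain z where z: "\<forall>k. z \<in> G k" by blast
  have "z \<in> Q"
    unfolding Q_def
  proof (intro CollectI allI)
    fix n
    define X where "X = t @ replicate n False"
    have "z \<in> F X" using z unfolding G_def X_def by simp
    then have "z \<in> F (take n X @ drop n X)" by (simp only: append_take_drop_id)
    then have "z \<in> F (take n X)" using F_app by blast
    moreover have "length (take n X) = n" by (simp add: X_def)
    ultimately show "\<exists>s. length s = n \<and> z \<in> F s" by blast
  qed
  moreover have "z \<in> F t" using z[rule_format, of 0] unfolding G_def by simp
  ultimately show ?thesis by blast
qed

lemma Q_sub: "Q \<subseteq> P"
proof
  fix x assume "x \<in> Q"
  then obtain s where "x \<in> F s" unfolding Q_def by blast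
  then show "x \<in> P" by (simp add: F_def)
qed

lemma Q_closed: "closed Q"
proof -
  have "Q = (\<Inter>n. \<Union>s\<in>Lev n. F s)" by (rule set_eqI) (simp add: Q_def Bex_def)
  moreover have "closed (\<Union>s\<in>Lev n. F s)" for n
    by (rule closed_UN) (auto simp: finite_Lev F_closed)
  ultimately show ?thesis by (simp add: closed_INT)
qed

lemma Q_perf: "\<forall>x\<in>Q. x islimpt Q"
proof (intro ballI)
  fix x assume x: "x \<in> Q"
  show "x islimpt Q"
    unfolding islimpt_def
  proof (intro allI impI)
    fix U assume "x \<in> U" "open U"
    then obtain r where r: "r > 0" "\<forall>y. d x y < r \<longrightarrow> y \<in> U" using open_ball[OF \<open>open U\<close> \<open>x \<in> U\<close>] by blast
    obtain n where n: "(1/2::real)^n < r" using real_arch_pow_inv[of r "1/2"] r by auto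
    obtain u where u: "length u = Suc n" "x \<in> F u" using x unfolding Q_def by blast
    define s where "s = butlast u"
    define b where "b = last u"
    have us: "u = s @ [b]" using u(1) unfolding s_def b_def
      by (metis append_butlast_last_id list.size(3) nat.distinct(1))
    have ls: "length s = n" using u(1) by (simp add: s_def)
    obtain y where y: "y \<in> Q" "y \<in> F (s @ [\<not> b])" using meetQ by blast
    have "y \<noteq> x"
    proof
      assume "y = x"
      then show False using F_disj[of "s @ [\<not> b]" u x] y u us by auto
    qed
    moreover have "x \<in> F s" "y \<in> F s" using F_sub u(2) y(2) us by blast+
    then have "d x y \<le> (1/2)^n" using F_diam ls by metis
    then have "y \<in> U" using n r by auto
    ultimately show "\<exists>y\<in>Q. y \<in> U \<and> y \<noteq> x" using y by blast
  qed
qed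

lemma level_sep:
  assumes "finite S"
  shows "\<exists>n. \<forall>a\<in>S. \<forall>b\<in>S. a \<noteq> b \<longrightarrow> (1/2::real)^n < d a b"
proof -
  have "\<forall>p\<in>S\<times>S. eventually (\<lambda>n. fst p \<noteq> snd p \<longrightarrow> (1/2::real)^n < d (fst p) (snd p)) sequentially"
  proof
    fix p assume "p \<in> S \<times> S"
    show "eventually (\<lambda>n. fst p \<noteq> snd p \<longrightarrow> (1/2::real)^n < d (fst p) (snd p)) sequentially"
    proof (cases "fst p = snd p")
      case True then show ?thesis by simp
    next
      case False
      then have "d (fst p) (snd p) > 0" using zero nonneg by (metis UNIV_I less_eq_real_def)
      then have "eventually (\<lambda>n. (1/2::real)^n < d (fst p) (snd p)) sequentially"
        using order_tendstoD(2)[OF LIMSEQ_power_zero[of "1/2::real"]] by simp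
      then show ?thesis by (rule eventually_mono) simp
    qed
  qed
  then have "eventually (\<lambda>n. \<forall>p\<in>S\<times>S. fst p \<noteq> snd p \<longrightarrow> (1/2::real)^n < d (fst p) (snd p)) sequentially"
    using assms by (intro eventually_ball_finite) auto
  then obtain N where N: "\<forall>p\<in>S\<times>S. fst p \<noteq> snd p \<longrightarrow> (1/2::real)^N < d (fst p) (snd p)"
    unfolding eventually_sequentially by blast
  then show ?thesis
  proof (intro exI ballI impI)
    fix a b assume "a \<in> S" "b \<in> S" "a \<noteq> b"
    then have "(a,b) \<in> S \<times> S" by simp
    then show "(1/2::real)^N < d a b" using N \<open>a\<noteq>b\<close> by fastforce
  qed
qed

lemma Q_skew: "skew Q"
  unfolding skew_def
proof (intro ballI impI)
  fix x y v w assume Q4: "x \<in> Q" "y \<in> Q" "v \<in> Q" "w \<in> Q" and pat: "x \<noteq> y \<and> v \<noteq> w \<and> {x, y} \<noteq> {v, w}"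
  define S where "S = {x,y,v,w}"
  have xS: "x \<in> S" and yS: "y \<in> S" and vS: "v \<in> S" and wS: "w \<in> S" unfolding S_def by blast+
  have SQ: "S \<subseteq> Q" using Q4 unfolding S_def by blast
  have "finite S" unfolding S_def by simp
  then obtain n where n: "\<forall>a\<in>S. \<forall>b\<in>S. a \<noteq> b \<longrightarrow> (1/2::real)^n < d a b"
    using level_sep[OF \<open>finite S\<close>] by blast
  define \<sigma> where "\<sigma> a = (SOME s. length s = n \<and> a \<in> F s)" for a
  have \<sigma>: "length (\<sigma> a) = n \<and> a \<in> F (\<sigma> a)" if "a \<in> Q" for a
  proof -
    have "\<exists>s. length s = n \<and> a \<in> F s" using that unfolding Q_def by blast
    then show ?thesis unfolding \<sigma>_def by (rule someI_ex)
  qed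
  have E: "a = b" if "a \<in> S" "b \<in> S" "\<sigma> a = \<sigma> b" for a b
  proof (rule ccontr)
    assume "a \<noteq> b"
    then have lt: "(1/2::real)^n < d a b" using n that by blast
    have "a \<in> Q" "b \<in> Q" using SQ that by blast+
    then have "a \<in> F (\<sigma> a)" "b \<in> F (\<sigma> a)" "length (\<sigma> a) = n" using \<sigma> that(3) by metis+
    then have "d a b \<le> (1/2)^n" using F_diam by metis
    then show False using lt by simp
  qed
  define c where "c = fst (lvl p0 n)"
  define \<psi> where "\<psi> t = (if t = \<sigma> x then x else if t = \<sigma> y then y else if t = \<sigma> v then v
                         else if t = \<sigma> w then w else c t)" for t
  have \<psi>cases: "\<psi> t = c t \<or> (\<psi> t \<in> S \<and> \<sigma> (\<psi> t) = t)" for t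
    unfolding \<psi>_def using xS yS vS wS by auto
  have box: "\<forall>t\<in>Lev n. \<psi> t \<in> P \<and> d (c t) (\<psi> t) < snd (lvl p0 n) t"
  proof
    fix t assume t: "t \<in> Lev n"
    have CRt: "c t = C t" "snd (lvl p0 n) t = R t" using t by (auto simp: c_def C_def R_def)
    show "\<psi> t \<in> P \<and> d (c t) (\<psi> t) < snd (lvl p0 n) t"
    proof (cases "\<psi> t = c t")
      case True
      then show ?thesis using CR[of t] CRt by simp
    next
      case False
      then have a: "\<psi> t \<in> S" "\<sigma> (\<psi> t) = t" using \<psi>cases by blast+
      have "\<psi> t \<in> Q" using SQ a(1) by blast
      then have "\<psi> t \<in> F (\<sigma> (\<psi> t))" using \<sigma> by blast
      then have "\<psi> t \<in> F t" using a(2) by simp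
      then show ?thesis using CR(2)[of t] CRt by (simp add: F_def)
    qed
  qed
  have \<psi>x: "\<psi> (\<sigma> x) = x" unfolding \<psi>_def by simp
  have \<psi>y: "\<psi> (\<sigma> y) = y" unfolding \<psi>_def using E[OF yS xS] by auto
  have \<psi>v: "\<psi> (\<sigma> v) = v" unfolding \<psi>_def using E[OF vS xS] E[OF vS yS] by auto
  have \<psi>w: "\<psi> (\<sigma> w) = w" unfolding \<psi>_def using E[OF wS xS] E[OF wS yS] E[OF wS vS] by auto
  have lev: "\<sigma> a \<in> Lev n" if "a \<in> S" for a
  proof -
    have "a \<in> Q" using SQ that by blast
    then show ?thesis using \<sigma> by simp
  qed
  have "ks (\<sigma> x) (\<sigma> y) (\<sigma> v) (\<sigma> w) \<in> KK n" by (rule ks_in[OF lev[OF xS] lev[OF yS] lev[OF vS] lev[OF wS]])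
  then have K: "ks (\<sigma> x) (\<sigma> y) (\<sigma> v) (\<sigma> w) \<psi>" using invL[of n] box unfolding Inv_lv_def c_def by blast
  have injS: "inj_on \<sigma> S" unfolding inj_on_def using E by blast
  have p1: "\<sigma> x \<noteq> \<sigma> y" "\<sigma> v \<noteq> \<sigma> w" using pat E[OF xS yS] E[OF vS wS] by blast+
  have p2: "{\<sigma> x, \<sigma> y} \<noteq> {\<sigma> v, \<sigma> w}"
  proof
    assume "{\<sigma> x, \<sigma> y} = {\<sigma> v, \<sigma> w}"
    then have im: "\<sigma> ` {x,y} = \<sigma> ` {v,w}" by simp
    have sub: "{x,y} \<subseteq> S" "{v,w} \<subseteq> S" using xS yS vS wS by blast+
    have "{x,y} = {v,w}" using inj_on_image_eq_iff[OF injS sub] im by blast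
    then show False using pat by blast
  qed
  have "pat (\<sigma> x) (\<sigma> y) (\<sigma> v) (\<sigma> w)" unfolding pat_def using p1 p2 by blast
  then have "\<psi> (\<sigma> x) - \<psi> (\<sigma> y) \<noteq> \<psi> (\<sigma> v) - \<psi> (\<sigma> w)" using K unfolding ks_def by blast
  then show "x - y \<noteq> v - w" using \<psi>x \<psi>y \<psi>v \<psi>w by simp
qed

lemma main2: "Q \<subseteq> P \<and> perfect_set Q \<and> skew Q \<and> Q \<noteq> {}"
  using Q_sub Q_closed Q_perf Q_skew meetQ unfolding perfect_set_def by blast

end

theorem lemma3p4:
  fixes P :: "'a::{topological_space, group_add} set"
  assumes "polish_group TYPE('a)"
    and "perfect_set P"
  shows "\<exists>Q. Q \<subseteq> P \<and> perfect_set Q \<and> skew Q \<and> (P \<noteq> {} \<longrightarrow> Q \<noteq> {})"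
proof (cases "P = {}")
  case True
  then show ?thesis by (intro exI[of _ "{}"]) (simp add: perfect_set_def skew_def)
next
  case False
  then obtain p0 where p0: "p0 \<in> P" by blast
  have pg: "Polish_space (euclidean :: 'a topology)" "continuous_on (UNIV :: ('a \<times> 'a) set) (\<lambda>p. fst p + snd p)"
     "continuous_on (UNIV :: 'a set) uminus"
    using assms(1) unfolding polish_group_def by auto
  then obtain M d where Md: "Metric_space M (d :: 'a \<Rightarrow> 'a \<Rightarrow> real)" "Metric_space.mcomplete M d"
    "(euclidean :: 'a topology) = Metric_space.mtopology M d"
    unfolding Polish_space_def completely_metrizable_space_def by blast
  have MU: "M = UNIV"
    using Metric_space.topspace_mtopology[OF Md(1)] Md(3) by (metis topspace_euclidean)
  have m: "Metric_space UNIV d" using Md(1)[unfolded MU] .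
  have mt: "Metric_space.mtopology UNIV d = euclidean" using Md(3)[unfolded MU, symmetric] .
  have mc: "Metric_space.mcomplete UNIV d" using Md(2)[unfolded MU] .
  have pp1: "closed P" using assms(2)[unfolded perfect_set_def] by (rule conjunct1)
  have pp2: "\<forall>x\<in>P. x islimpt P" using assms(2)[unfolded perfect_set_def] by (rule conjunct2)
  have pgm: "PGM d P" by (rule PGM.intro[OF m PGM_axioms.intro[OF mt mc pg(2) pg(3) pp1 pp2]])
  have pgm2: "PGM2 d P p0" by (rule PGM2.intro[OF pgm PGM2_axioms.intro[OF p0]])
  have mm: "PGM2.Q d P p0 \<subseteq> P \<and> perfect_set (PGM2.Q d P p0) \<and> skew (PGM2.Q d P p0) \<and> PGM2.Q d P p0 \<noteq> {}"
    by (rule PGM2.main2[OF pgm2])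
  show ?thesis by (rule exI[of _ "PGM2.Q d P p0"]) (use mm in blast)
qed

end
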